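(* In the Cross Model on the strip $\mathbb{Z}_K$ (with $K\ge1$ an integer and $\varepsilon\in(0,1)$), the processes $(\mathbf{D}^{K,d}_i)_{i\ge0}$ and $(\mathbf{Y}_i)_{i\ge0}$ are Markov chains. Moreover, $(\mathbf{Y}_i)_{i\ge0}$ has the law of the discrete-time synchronous TASEP on $[\![-K+1,K]\!]$ in which the jump probability, the entry probability and the exit probability are all equal to $\varepsilon$.
   Context: Cross Model: $\mathbb{Z}_K=\mathbb{Z}\times[\![-K,K]\!]$ with vertical edges $(i,j)\to(i,j+1)$ ($j\in[\![-K,K-1]\!]$), horizontal edges $(i,j)\to(i+1,j)$, and diagonal edges $(i,j)\to(i+1,j\pm1)$ (within the strip). Vertical and horizontal edges have length $1$, diagonal edges length $2$. All vertical and diagonal edges are open; each horizontal edge is open with probability $1-\varepsilon$ and closed with probability $\varepsilon$, independently. For $i\ge0$, $j\in[\![-K,K]\!]$, $D^{K,d}(i,j)$ is the length of a shortest path of open edges in $\mathbb{Z}_K$ from $(0,0)$ to $(i,j)$, and $\mathbf{D}^{K,d}_i=(D^{K,d}(i,j))_{j\in[\![-K,K]\!]}$. Define $\mathbf{Y}_i=(Y_i^j)_{j\in[\![-K+1,K]\!]}\in\{\bullet,\circ\}^{2K}$ by $Y_i^j=\bullet$ if $D^{K,d}(i,j)=D^{K,d}(i,j-1)-1$ and $Y_i^j=\circ$ if $D^{K,d}(i,j)=D^{K,d}(i,j-1)+1$ (one of these always holds); site $j$ is occupied by a particle at time $i$ iff $Y_i^j=\bullet$. The synchronous TASEP on $[\![-K+1,K]\!]$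 with jump, entry and exit probability $\varepsilon$ is the Markov chain on $\{\bullet,\circ\}^{2K}$ where, from time $t$ to $t+1$, independently: each particle at $j\in[\![-K+1,K-1]\!]$ such that site $j+1$ is empty at time $t$ moves to $j+1$ with probability $\varepsilon$; if site $-K+1$ is empty at time $t$, a particle enters there with probability $\varepsilon$; if site $K$ is occupied at time $t$, its particle exits with probability $\varepsilon$. *)

theory Defs
  imports "HOL-Probability.Probability"
begin

definition in_strip :: "nat \<Rightarrow> int \<times> int \<Rightarrow> bool" where
  "in_strip K v \<longleftrightarrow> - int K \<le> snd v \<and> snd v \<le> int K"

text \<open>An edge configuration: omega (i,j) = True iff the horizontal edge (i,j)--(i+1,j) is open.\<close>

definition open_edge :: "nat \<Rightarrow> (int \<times> int \<Rightarrow> bool) \<Rightarrow> int \<times> int \<Rightarrow> int \<times> int \<Rightarrow> nat \<Rightarrow> bool" where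
  "open_edge K \<omega> u v w \<longleftrightarrow> in_strip K u \<and> in_strip K v \<and>
     ((fst u = fst v \<and> \<bar>snd u - snd v\<bar> = 1 \<and> w = 1)
    \<or> (\<bar>fst u - fst v\<bar> = 1 \<and> snd u = snd v \<and> w = 1 \<and> \<omega> (min (fst u) (fst v), snd u))
    \<or> (\<bar>fst u - fst v\<bar> = 1 \<and> \<bar>snd u - snd v\<bar> = 1 \<and> w = 2))"

inductive path_len :: "nat \<Rightarrow> (int \<times> int \<Rightarrow> bool) \<Rightarrow> int \<times> int \<Rightarrow> int \<times> int \<Rightarrow> nat \<Rightarrow> bool"
  for K \<omega> where
  refl: "path_len K \<omega> u u 0"
| step: "open_edge K \<omega> u v w \<Longrightarrow> path_len K \<omega> v x n \<Longrightarrow> path_len K \<omega> u x (w + n)"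

definition Dist :: "nat \<Rightarrow> (int \<times> int \<Rightarrow> bool) \<Rightarrow> int \<Rightarrow> int \<Rightarrow> nat" where
  "Dist K \<omega> i j = (LEAST n. path_len K \<omega> (0, 0) (i, j) n)"

definition Dvec :: "nat \<Rightarrow> (int \<times> int \<Rightarrow> bool) \<Rightarrow> nat \<Rightarrow> int \<Rightarrow> nat" where
  "Dvec K \<omega> i = (\<lambda>j. if - int K \<le> j \<and> j \<le> int K then Dist K \<omega> (int i) j else 0)"

definition Yvec :: "nat \<Rightarrow> (int \<times> int \<Rightarrow> bool) \<Rightarrow> nat \<Rightarrow> int \<Rightarrow> bool" where
  "Yvec K \<omega> i = (\<lambda>j. if - int K + 1 \<le> j \<and> j \<le> int K
        then Dist K \<omega> (int i) j + 1 = Dist K \<omega> (int i) (j - 1) else False)"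

definition edge_space :: "real \<Rightarrow> (int \<times> int \<Rightarrow> bool) measure" where
  "edge_space \<epsilon> = PiM UNIV (\<lambda>_. measure_pmf (bernoulli_pmf (1 - \<epsilon>)))"

text \<open>Independent coins c j (j in [-K,K]), each True with probability eps:
  c(-K) is the entry coin, c j (-K+1 <= j <= K-1) the jump coin of a particle at j,
  c K the exit coin of a particle at K.\<close>
definition tasep_update :: "nat \<Rightarrow> (int \<Rightarrow> bool) \<Rightarrow> (int \<Rightarrow> bool) \<Rightarrow> int \<Rightarrow> bool" where
  "tasep_update K \<eta> c = (\<lambda>j.
     if - int K + 1 \<le> j \<and> j \<le> int K then
       (\<eta> j \<and> \<not> ((j < int K \<and> \<not> \<eta> (j + 1) \<and> c j) \<or> (j = int K \<and> c j)))
       \<or> (- int K + 1 < j \<and> \<eta> (j - 1) \<and> \<not> \<eta> j \<and> c (j - 1))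
       \<or> (j = - int K + 1 \<and> \<not> \<eta> j \<and> c (- int K))
     else False)"

definition tasep_step :: "nat \<Rightarrow> real \<Rightarrow> (int \<Rightarrow> bool) \<Rightarrow> (int \<Rightarrow> bool) pmf" where
  "tasep_step K \<epsilon> \<eta> =
     map_pmf (tasep_update K \<eta>) (Pi_pmf {- int K .. int K} False (\<lambda>_. bernoulli_pmf \<epsilon>))"

end

theory Submission
  imports Defs
begin


definition lm :: "nat \<Rightarrow> (int \<Rightarrow> int) \<Rightarrow> int \<Rightarrow> bool" where
  "lm K D j \<longleftrightarrow> (j = - int K \<or> D (j - 1) = D j + 1) \<and> (j = int K \<or> D (j + 1) = D j + 1)"

definition stepD :: "nat \<Rightarrow> (int \<Rightarrow> bool) \<Rightarrow> (int \<Rightarrow> int) \<Rightarrow> int \<Rightarrow> int" where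
  "stepD K c D = (\<lambda>j. D j + 1 + (if lm K D j \<and> c j then 2 else 0))"

definition col :: "nat \<Rightarrow> (int \<times> int \<Rightarrow> bool) \<Rightarrow> nat \<Rightarrow> int \<Rightarrow> bool" where
  "col K \<omega> k = (\<lambda>j. if - int K \<le> j \<and> j \<le> int K then \<not> \<omega> (int k, j) else False)"

fun Dseq :: "nat \<Rightarrow> (int \<times> int \<Rightarrow> bool) \<Rightarrow> nat \<Rightarrow> int \<Rightarrow> int" where
  "Dseq K \<omega> 0 = (\<lambda>j. \<bar>j\<bar>)"
| "Dseq K \<omega> (Suc k) = stepD K (col K \<omega> k) (Dseq K \<omega> k)"

definition invD :: "nat \<Rightarrow> (int \<Rightarrow> int) \<Rightarrow> bool" where
  "invD K D \<longleftrightarrow> (\<forall>j. - int K \<le> j \<and> j < int K \<longrightarrow> \<bar>D (j + 1) - D j\<bar> = 1)"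

lemma stepD_ge: "stepD K c D j \<ge> D j + 1" and stepD_le: "stepD K c D j \<le> D j + 3"
  by (auto simp: stepD_def)

lemma invD_step:
  assumes "invD K D" shows "invD K (stepD K c D)"
  unfolding invD_def
proof (intro allI impI)
  fix j assume j: "- int K \<le> j \<and> j < int K"
  have a: "\<bar>D (j + 1) - D j\<bar> = 1" using assms j by (auto simp: invD_def)
  show "\<bar>stepD K c D (j + 1) - stepD K c D j\<bar> = 1"
    using a j by (auto simp: stepD_def lm_def)
qed

lemma invD_Dseq: "invD K (Dseq K \<omega> i)"
proof (induction i)
  case 0 show ?case by (auto simp: invD_def)
next
  case (Suc i) then show ?case by (simp add: invD_step)
qed

lemma Dseq_nonneg: "Dseq K \<omega> i j \<ge> 0"
proof (induction i arbitrary: j)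
  case 0 show ?case by simp
next
  case (Suc i) then show ?case using stepD_ge[of "Dseq K \<omega> i" j K] by (simp, smt)
qed

lemma diag_bound:
  assumes "invD K D" "- int K \<le> b" "b \<le> int K" "- int K \<le> b'" "b' \<le> int K" "\<bar>b - b'\<bar> = 1"
  shows "stepD K c D b' \<le> D b + 2"
proof (cases "b = b' + 1")
  case True
  have "\<bar>D b - D b'\<bar> = 1" using assms True by (auto simp: invD_def)
  then show ?thesis using True assms by (auto simp: stepD_def lm_def)
next
  case False
  then have F: "b = b' - 1" using assms by auto
  have "\<bar>D b' - D b\<bar> = 1" using assms F invD_def[of K D] by (smt (verit))
  then show ?thesis using F assms by (auto simp: stepD_def lm_def)
qed

definition phi :: "nat \<Rightarrow> (int \<times> int \<Rightarrow> bool) \<Rightarrow> int \<times> int \<Rightarrow> int" where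
  "phi K \<omega> v = (if fst v < 0 then - fst v + \<bar>snd v\<bar> else Dseq K \<omega> (nat (fst v)) (snd v))"

lemma Dseq_Suc_le_open:
  assumes "\<omega> (int i, b)" "- int K \<le> b" "b \<le> int K"
  shows "Dseq K \<omega> (Suc i) b \<le> Dseq K \<omega> i b + 1"
  using assms by (simp add: stepD_def col_def)

lemma phi_edge:
  assumes "open_edge K \<omega> u v w"
  shows "phi K \<omega> v \<le> phi K \<omega> u + int w"
proof -
  obtain a b a' b' where u: "u = (a, b)" and v: "v = (a', b')" by (cases u, cases v)
  have sb: "- int K \<le> b" "b \<le> int K" "- int K \<le> b'" "b' \<le> int K"
    using assms u v by (auto simp: open_edge_def in_strip_def)
  have cases: "(a = a' \<and> \<bar>b - b'\<bar> = 1 \<and> w = 1)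
    \<or> (\<bar>a - a'\<bar> = 1 \<and> b = b' \<and> w = 1 \<and> \<omega> (min a a', b))
    \<or> (\<bar>a - a'\<bar> = 1 \<and> \<bar>b - b'\<bar> = 1 \<and> w = 2)"
    using assms u v by (auto simp: open_edge_def)
  show ?thesis
  proof (cases "a < 0 \<or> a' < 0")
    case True
    have ge: "Dseq K \<omega> 0 b' = \<bar>b'\<bar>" by simp
    show ?thesis using True cases u v by (auto simp: phi_def)
  next
    case False
    then have nn: "a \<ge> 0" "a' \<ge> 0" by auto
    define i where "i = nat a"
    have ai: "a = int i" using nn i_def by auto
    have inv: "invD K (Dseq K \<omega> i)" by (rule invD_Dseq)
    from cases show ?thesis
    proof (elim disjE conjE)
      assume "a = a'" "\<bar>b - b'\<bar> = 1" "w = 1"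
      moreover have "\<bar>Dseq K \<omega> i b' - Dseq K \<omega> i b\<bar> = 1"
      proof (cases "b' = b + 1")
        case True then show ?thesis using inv sb unfolding invD_def by auto
      next
        case False then have "b = b' + 1" using \<open>\<bar>b - b'\<bar> = 1\<close> by auto
        then show ?thesis using inv sb unfolding invD_def by (smt (verit))
      qed
      ultimately show ?thesis using u v ai \<open>a = a'\<close> \<open>w = 1\<close> by (simp add: phi_def)
    next
      assume h: "\<bar>a - a'\<bar> = 1" "b = b'" "w = 1" "\<omega> (min a a', b)"
      show ?thesis
      proof (cases "a' = a + 1")
        case True
        have pv: "phi K \<omega> v = Dseq K \<omega> (Suc i) b'" using True ai v by (simp add: phi_def nat_add_distrib)
        have pu: "phi K \<omega> u = Dseq K \<omega> i b" using ai u by (simp add: phi_def)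
        have "\<omega> (int i, b)" using h True ai by simp
        then show ?thesis using Dseq_Suc_le_open[of \<omega> i b K] sb pu pv h by simp
      next
        case False
        then have "a = a' + 1" using h by auto
        then obtain i' where "a' = int i'" "i = Suc i'"
        proof -
          assume r: "\<And>i'. a' = int i' \<Longrightarrow> i = Suc i' \<Longrightarrow> thesis"
          have e1: "a' = int (nat a')" using nn by simp
          have "int i = int (nat a') + 1" using ai e1 \<open>a = a' + 1\<close> by linarith
          then have "i = Suc (nat a')" by linarith
          then show thesis using r e1 by blast
        qed
        moreover have pu0: "phi K \<omega> u = Dseq K \<omega> i b" using ai u by (simp add: phi_def)
        ultimately have pv: "phi K \<omega> v = Dseq K \<omega> i' b'" and pu: "phi K \<omega> u = Dseq K \<omega> (Suc i') b"
          using v by (auto simp: phi_def)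
        then show ?thesis using stepD_ge[of "Dseq K \<omega> i'" b K "col K \<omega> i'"] h by simp
      qed
    next
      assume h: "\<bar>a - a'\<bar> = 1" "\<bar>b - b'\<bar> = 1" "w = 2"
      show ?thesis
      proof (cases "a' = a + 1")
        case True
        have pv: "phi K \<omega> v = Dseq K \<omega> (Suc i) b'" using True ai v by (simp add: phi_def nat_add_distrib)
        have pu: "phi K \<omega> u = Dseq K \<omega> i b" using ai u by (simp add: phi_def)
        show ?thesis using diag_bound[OF inv sb h(2), of "col K \<omega> i"] pu pv h by simp
      next
        case False
        then have "a = a' + 1" using h by auto
        then obtain i' where i': "a' = int i'" "i = Suc i'"
        proof -
          assume r: "\<And>i'. a' = int i' \<Longrightarrow> i = Suc i' \<Longrightarrow> thesis"
          have e1: "a' = int (nat a')" using nn by simp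
          have "int i = int (nat a') + 1" using ai e1 \<open>a = a' + 1\<close> by linarith
          then have "i = Suc (nat a')" by linarith
          then show thesis using r e1 by blast
        qed
        have inv': "invD K (Dseq K \<omega> i')" by (rule invD_Dseq)
        have "\<bar>Dseq K \<omega> i' b' - Dseq K \<omega> i' b\<bar> = 1"
        proof (cases "b' = b + 1")
          case True then show ?thesis using inv' sb unfolding invD_def by auto
        next
          case False then have "b = b' + 1" using h by auto
          then show ?thesis using inv' sb unfolding invD_def by (smt (verit))
        qed
        moreover have pu0: "phi K \<omega> u = Dseq K \<omega> i b" using ai u by (simp add: phi_def)
        moreover have pv: "phi K \<omega> v = Dseq K \<omega> i' b'" and pu: "phi K \<omega> u = Dseq K \<omega> (Suc i') b"
          using v i' pu0 by (auto simp: phi_def)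
        ultimately show ?thesis using stepD_ge[of "Dseq K \<omega> i'" b K "col K \<omega> i'"] h by simp
      qed
    qed
  qed
qed

lemma phi_path:
  assumes "path_len K \<omega> u x n"
  shows "phi K \<omega> x \<le> phi K \<omega> u + int n"
  using assms
proof (induction rule: path_len.induct)
  case (refl u) then show ?case by simp
next
  case (step u v w x n)
  then show ?case using phi_edge[OF step(1)] by simp
qed

lemma path_trans:
  assumes "path_len K \<omega> u v n" "path_len K \<omega> v x m"
  shows "path_len K \<omega> u x (n + m)"
  using assms
proof (induction arbitrary: m rule: path_len.induct)
  case (refl u) then show ?case by simp
next
  case (step u v w y n)
  have "path_len K \<omega> v x (n + m)" using step.IH step.prems by blast
  from path_len.step[OF step.hyps(1) this] show ?case by (simp add: add.assoc)
qed

lemma edge_path: "open_edge K \<omega> u v w \<Longrightarrow> path_len K \<omega> u v w"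
  using path_len.step[OF _ path_len.refl] by fastforce

lemma vpath_up:
  "- int K \<le> b \<Longrightarrow> b + int m \<le> int K \<Longrightarrow>
    path_len K \<omega> (a, b) (a, b + int m) m \<and> path_len K \<omega> (a, b + int m) (a, b) m"
proof (induction m)
  case 0 then show ?case by (simp add: path_len.refl)
next
  case (Suc m)
  then have IH: "path_len K \<omega> (a, b) (a, b + int m) m" "path_len K \<omega> (a, b + int m) (a, b) m" by auto
  have e1: "open_edge K \<omega> (a, b + int m) (a, b + int (Suc m)) 1"
    and e2: "open_edge K \<omega> (a, b + int (Suc m)) (a, b + int m) 1"
    using Suc.prems by (auto simp: open_edge_def in_strip_def)
  have "path_len K \<omega> (a, b) (a, b + int (Suc m)) (m + 1)"
    using path_trans[OF IH(1) edge_path[OF e1]] .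
  moreover have "path_len K \<omega> (a, b + int (Suc m)) (a, b) (1 + m)"
    using path_trans[OF edge_path[OF e2] IH(2)] .
  ultimately show ?case by simp
qed

lemma vpath:
  assumes "- int K \<le> b" "b \<le> int K" "- int K \<le> b'" "b' \<le> int K"
  shows "path_len K \<omega> (a, b) (a, b') (nat \<bar>b - b'\<bar>)"
proof (cases "b \<le> b'")
  case True
  have "b' = b + int (nat (b' - b))" using True by simp
  then show ?thesis using vpath_up[of K b "nat (b' - b)" \<omega> a] assms True
    by (metis abs_minus_commute abs_of_nonneg diff_ge_0_iff_ge)
next
  case False
  have "b = b' + int (nat (b - b'))" using False by simp
  then show ?thesis using vpath_up[of K b' "nat (b - b')" \<omega> a] assms False
    by (metis abs_of_nonneg diff_ge_0_iff_ge nle_le)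
qed

lemma path_upper:
  assumes K: "K \<ge> 1" and j: "- int K \<le> j" "j \<le> int K"
  shows "path_len K \<omega> (0, 0) (int i, j) (nat (Dseq K \<omega> i j))"
  using j
proof (induction i arbitrary: j)
  case 0
  then show ?case using vpath[of K 0 j \<omega> 0] by simp
next
  case (Suc i)
  define D where "D = Dseq K \<omega> i"
  have inv: "invD K D" unfolding D_def by (rule invD_Dseq)
  have nn: "\<And>j. D j \<ge> 0" unfolding D_def by (rule Dseq_nonneg)
  have IH: "\<And>j. - int K \<le> j \<Longrightarrow> j \<le> int K \<Longrightarrow> path_len K \<omega> (0, 0) (int i, j) (nat (D j))"
    using Suc.IH unfolding D_def by blast
  have si: "int (Suc i) = int i + 1" by simp
  let ?c = "col K \<omega> i"
  have DS: "Dseq K \<omega> (Suc i) j = stepD K ?c D j" by (simp add: D_def)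
  show ?case
  proof (cases "lm K D j \<and> ?c j")
    case False
    then have eq: "Dseq K \<omega> (Suc i) j = D j + 1" using DS by (simp add: stepD_def)
    show ?thesis
    proof (cases "?c j")
      case False
      then have "\<omega> (int i, j)" using Suc.prems by (simp add: col_def)
      then have e: "open_edge K \<omega> (int i, j) (int (Suc i), j) 1"
        using Suc.prems by (auto simp: open_edge_def in_strip_def)
      have "path_len K \<omega> (0, 0) (int (Suc i), j) (nat (D j) + 1)"
        using path_trans[OF IH[OF Suc.prems] edge_path[OF e]] .
      then show ?thesis using eq nn[of j] by (simp add: nat_add_distrib)
    next
      case True
      then have nlm: "\<not> lm K D j" using False by simp
      obtain k where k: "- int K \<le> k" "k \<le> int K" "\<bar>k - j\<bar> = 1" "D k + 1 = D j"
      proof (cases "j = - int K \<or> D (j - 1) = D j + 1")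
        case True
        then have "j \<noteq> int K" "D (j + 1) \<noteq> D j + 1" using nlm by (auto simp: lm_def)
        moreover have "\<bar>D (j + 1) - D j\<bar> = 1" using inv Suc.prems calculation by (auto simp: invD_def)
        ultimately show thesis using that[of "j + 1"] Suc.prems by auto
      next
        case False
        moreover have "- int K \<le> j - 1 \<and> j - 1 < int K" using Suc.prems False by auto
        note inv[unfolded invD_def, rule_format, OF this]
        ultimately show thesis using that[of "j - 1"] Suc.prems by auto
      qed
      have e: "open_edge K \<omega> (int i, k) (int (Suc i), j) 2"
        using Suc.prems k by (auto simp: open_edge_def in_strip_def)
      have "path_len K \<omega> (0, 0) (int (Suc i), j) (nat (D k) + 2)"
        using path_trans[OF IH[OF k(1,2)] edge_path[OF e]] .
      moreover have "nat (D j + 1) = nat (D k) + 2"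
      proof -
        have "D j + 1 = D k + 2" using k(4) by simp
        then show ?thesis using nn[of k] by (simp add: nat_add_distrib)
      qed
      ultimately show ?thesis using eq by simp
    qed
  next
    case True
    then have eq: "Dseq K \<omega> (Suc i) j = D j + 3" using DS by (simp add: stepD_def)
    obtain k where k: "- int K \<le> k" "k \<le> int K" "\<bar>k - j\<bar> = 1"
    proof (cases "j < int K")
      case True then show thesis using that[of "j + 1"] Suc.prems by auto
    next
      case False then show thesis using that[of "j - 1"] Suc.prems K by auto
    qed
    have e: "open_edge K \<omega> (int i, j) (int (Suc i), k) 2"
      using Suc.prems k by (auto simp: open_edge_def in_strip_def)
    have p1: "path_len K \<omega> (0, 0) (int (Suc i), k) (nat (D j) + 2)"
      using path_trans[OF IH[OF Suc.prems] edge_path[OF e]] .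
    have p2: "path_len K \<omega> (int (Suc i), k) (int (Suc i), j) 1"
      using vpath[of K k j \<omega> "int (Suc i)"] k Suc.prems by simp
    have "path_len K \<omega> (0, 0) (int (Suc i), j) (nat (D j) + 2 + 1)"
      using path_trans[OF p1 p2] .
    moreover have "nat (D j) + 2 + 1 = nat (D j + 3)" using nn[of j] by (simp add: nat_add_distrib)
    ultimately show ?thesis using eq by simp
  qed
qed

lemma Dist_eq:
  assumes K: "K \<ge> 1" and j: "- int K \<le> j" "j \<le> int K"
  shows "Dist K \<omega> (int i) j = nat (Dseq K \<omega> i j)"
  unfolding Dist_def
proof (rule Least_equality)
  show "path_len K \<omega> (0, 0) (int i, j) (nat (Dseq K \<omega> i j))" by (rule path_upper[OF assms])
next
  fix n assume "path_len K \<omega> (0, 0) (int i, j) n"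
  from phi_path[OF this] have "Dseq K \<omega> i j \<le> int n" by (simp add: phi_def)
  then show "nat (Dseq K \<omega> i j) \<le> n" by simp
qed

lemma key:
  fixes x y z u :: int
  assumes "\<bar>z - y\<bar> = 1" "\<not> R \<Longrightarrow> \<bar>u - z\<bar> = 1" "\<not> L \<Longrightarrow> \<bar>y - x\<bar> = 1" "L \<Longrightarrow> cj1 = cK"
    "\<not> (L \<and> R)"
  shows "(z + 1 + (if (y = z + 1 \<and> (R \<or> u = z + 1)) \<and> cj then 2 else 0) + 1 =
          y + 1 + (if ((L \<or> x = y + 1) \<and> z = y + 1) \<and> cj1 then 2 else 0)) =
    ((z + 1 = y \<and> \<not> ((\<not> R \<and> \<not> (u + 1 = z) \<and> cj) \<or> (R \<and> cj))) \<or> (\<not> L \<and> y + 1 = x \<and> \<not> (z + 1 = y) \<and> cj1)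
      \<or> (L \<and> \<not> (z + 1 = y) \<and> cK))"
  using assms by (cases L; cases R; cases cj; cases cj1; simp; smt)

definition Gy :: "nat \<Rightarrow> (int \<Rightarrow> int) \<Rightarrow> int \<Rightarrow> bool" where
  "Gy K D = (\<lambda>j. if - int K + 1 \<le> j \<and> j \<le> int K then D j + 1 = D (j - 1) else False)"

lemma Gy_step:
  assumes K: "K \<ge> 1" and inv: "invD K D"
  shows "Gy K (stepD K c D) = tasep_update K (Gy K D) c"
proof
  fix j
  show "Gy K (stepD K c D) j = tasep_update K (Gy K D) c j"
  proof (cases "- int K + 1 \<le> j \<and> j \<le> int K")
    case False then show ?thesis by (auto simp: Gy_def tasep_update_def)
  next
    case True
    have a: "\<bar>D j - D (j - 1)\<bar> = 1"
      using inv[unfolded invD_def, rule_format, of "j - 1"] True by auto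
    have b: "j < int K \<Longrightarrow> \<bar>D (j + 1) - D j\<bar> = 1"
      using inv[unfolded invD_def, rule_format, of "j"] True by auto
    have c: "- int K + 1 < j \<Longrightarrow> \<bar>D (j - 1) - D (j - 1 - 1)\<bar> = 1"
      using inv[unfolded invD_def, rule_format, of "j - 2"] True by auto
    have jK: "j \<noteq> - int K" "j - 1 \<noteq> int K" using True by auto
    have lhs: "Gy K (stepD K c D) j =
      (D j + 1 + (if (D (j - 1) = D j + 1 \<and> (j = int K \<or> D (j + 1) = D j + 1)) \<and> c j then 2 else 0) + 1 =
       D (j - 1) + 1 + (if ((j = - int K + 1 \<or> D (j - 1 - 1) = D (j - 1) + 1) \<and> D j = D (j - 1) + 1) \<and> c (j - 1) then 2 else 0))"
      using True jK by (simp add: Gy_def stepD_def lm_def)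
    have rhs: "tasep_update K (Gy K D) c j =
       ((D j + 1 = D (j - 1) \<and> \<not> ((\<not> j = int K \<and> \<not> (D (j + 1) + 1 = D j) \<and> c j) \<or> (j = int K \<and> c j)))
       \<or> (\<not> j = - int K + 1 \<and> D (j - 1) + 1 = D (j - 1 - 1) \<and> \<not> (D j + 1 = D (j - 1)) \<and> c (j - 1))
       \<or> (j = - int K + 1 \<and> \<not> (D j + 1 = D (j - 1)) \<and> c (- int K)))"
      using True by (auto simp: Gy_def tasep_update_def)
    have "\<not> (j = - int K + 1 \<and> j = int K)" using K by auto
    moreover have "j = - int K + 1 \<Longrightarrow> c (j - 1) = c (- int K)" by auto
    moreover have "\<not> j = int K \<Longrightarrow> \<bar>D (j + 1) - D j\<bar> = 1" using b True by auto
    moreover have "\<not> j = - int K + 1 \<Longrightarrow> \<bar>D (j - 1) - D (j - 1 - 1)\<bar> = 1" using c True by auto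
    ultimately show ?thesis unfolding lhs rhs
      by (intro key[where L = "j = - int K + 1" and R = "j = int K"]) (use a in auto)
  qed
qed

definition fD :: "nat \<Rightarrow> (int \<Rightarrow> nat) \<Rightarrow> (int \<Rightarrow> bool) \<Rightarrow> int \<Rightarrow> nat" where
  "fD K d c = (\<lambda>j. if - int K \<le> j \<and> j \<le> int K then nat (stepD K c (\<lambda>j. int (d j)) j) else 0)"

definition d0 :: "nat \<Rightarrow> int \<Rightarrow> nat" where
  "d0 K = (\<lambda>j. if - int K \<le> j \<and> j \<le> int K then nat \<bar>j\<bar> else 0)"

lemma Dvec_eq:
  assumes "K \<ge> 1"
  shows "Dvec K \<omega> i = (\<lambda>j. if - int K \<le> j \<and> j \<le> int K then nat (Dseq K \<omega> i j) else 0)"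
  using Dist_eq[OF assms] by (auto simp: Dvec_def)

lemma Dvec_0: "K \<ge> 1 \<Longrightarrow> Dvec K \<omega> 0 = d0 K"
  by (simp add: Dvec_eq d0_def fun_eq_iff)

lemma stepD_local:
  assumes "\<And>x. - int K \<le> x \<Longrightarrow> x \<le> int K \<Longrightarrow> D x = D' x" "- int K \<le> j" "j \<le> int K"
  shows "stepD K c D j = stepD K c D' j"
proof -
  have "j \<noteq> - int K \<Longrightarrow> D (j - 1) = D' (j - 1)" "j \<noteq> int K \<Longrightarrow> D (j + 1) = D' (j + 1)"
    using assms by auto
  moreover have "D j = D' j" using assms by auto
  ultimately show ?thesis unfolding stepD_def lm_def by auto
qed

lemma Dvec_Suc:
  assumes "K \<ge> 1"
  shows "Dvec K \<omega> (Suc i) = fD K (Dvec K \<omega> i) (col K \<omega> i)"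
proof
  fix j
  show "Dvec K \<omega> (Suc i) j = fD K (Dvec K \<omega> i) (col K \<omega> i) j"
  proof (cases "- int K \<le> j \<and> j \<le> int K")
    case True
    have "stepD K (col K \<omega> i) (\<lambda>j. int (Dvec K \<omega> i j)) j = stepD K (col K \<omega> i) (Dseq K \<omega> i) j"
      by (rule stepD_local) (use True Dseq_nonneg in \<open>auto simp: Dvec_eq[OF assms]\<close>)
    moreover have "Dvec K \<omega> (Suc i) j = nat (Dseq K \<omega> (Suc i) j)" using True by (simp add: Dvec_eq[OF assms])
    moreover have "fD K (Dvec K \<omega> i) (col K \<omega> i) j = nat (stepD K (col K \<omega> i) (\<lambda>j. int (Dvec K \<omega> i j)) j)"
      using True by (simp add: fD_def)
    ultimately show ?thesis by simp
  next
    case False then show ?thesis by (auto simp: Dvec_eq[OF assms] fD_def)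
  qed
qed

lemma nat_suc_eq: "(0::int) \<le> a \<Longrightarrow> 0 \<le> b \<Longrightarrow> (Suc (nat a) = nat b) = (a + 1 = b)"
  by arith

lemma Yvec_eq:
  assumes "K \<ge> 1"
  shows "Yvec K \<omega> i = Gy K (Dseq K \<omega> i)"
proof
  fix j
  show "Yvec K \<omega> i j = Gy K (Dseq K \<omega> i) j"
  proof (cases "- int K + 1 \<le> j \<and> j \<le> int K")
    case True
    have "Dist K \<omega> (int i) j = nat (Dseq K \<omega> i j)" "Dist K \<omega> (int i) (j - 1) = nat (Dseq K \<omega> i (j - 1))"
      using True by (auto intro!: Dist_eq[OF assms])
    moreover have "Dseq K \<omega> i j \<ge> 0" "Dseq K \<omega> i (j - 1) \<ge> 0" by (rule Dseq_nonneg)+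
    ultimately show ?thesis using True by (simp add: Yvec_def Gy_def nat_suc_eq)
  next
    case False then show ?thesis by (auto simp: Yvec_def Gy_def)
  qed
qed

lemma Yvec_0: "K \<ge> 1 \<Longrightarrow> Yvec K \<omega> 0 = Gy K (\<lambda>j. \<bar>j\<bar>)"
  by (simp add: Yvec_eq)

lemma Yvec_Suc:
  assumes "K \<ge> 1"
  shows "Yvec K \<omega> (Suc i) = tasep_update K (Yvec K \<omega> i) (col K \<omega> i)"
  using Gy_step[OF assms invD_Dseq] by (simp add: Yvec_eq[OF assms])



fun traj :: "'s \<Rightarrow> ('s \<Rightarrow> 'c \<Rightarrow> 's) \<Rightarrow> (nat \<Rightarrow> 'c) \<Rightarrow> nat \<Rightarrow> 's" where
  "traj s0 f cs 0 = s0"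
| "traj s0 f cs (Suc k) = f (traj s0 f cs k) (cs k)"

lemma traj_cong: "(\<And>i. i < k \<Longrightarrow> cs i = cs' i) \<Longrightarrow> traj s0 f cs k = traj s0 f cs' k"
  by (induction k) auto

lemma measure_pair_pmf_times:
  "measure_pmf.prob (pair_pmf p q) (A \<times> B) = measure_pmf.prob p A * measure_pmf.prob q B"
proof -
  have "measure_pmf.prob (pair_pmf p q) (A \<times> B) = measure_pmf.prob (pair_pmf p q) ((A \<times> B) \<inter> set_pmf (pair_pmf p q))"
    by (rule measure_Int_set_pmf[symmetric])
  also have "(A \<times> B) \<inter> set_pmf (pair_pmf p q) = (A \<inter> set_pmf p) \<times> (B \<inter> set_pmf q)" by auto
  also have "measure_pmf.prob (pair_pmf p q) \<dots> = measure_pmf.prob p (A \<inter> set_pmf p) * measure_pmf.prob q (B \<inter> set_pmf q)"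
    by (rule measure_pmf_prob_product) auto
  also have "\<dots> = measure_pmf.prob p A * measure_pmf.prob q B" by (simp add: measure_Int_set_pmf)
  finally show ?thesis .
qed

lemma markov:
  fixes Q :: "'c pmf"
  shows "measure_pmf.prob (Pi_pmf {..<n} dflt (\<lambda>_. Q)) {cs. \<forall>k\<le>n. traj s0 f cs k = d k}
     = (if d 0 = s0 then 1 else 0) * (\<Prod>k<n. pmf (map_pmf (f (d k)) Q) (d (Suc k)))"
proof (induction n)
  case 0
  show ?case by (auto simp: measure_return)
next
  case (Suc n)
  let ?M = "Pi_pmf {..<n} dflt (\<lambda>_. Q)"
  have PI: "Pi_pmf {..<Suc n} dflt (\<lambda>_. Q) = map_pmf (\<lambda>(y, g). g(n := y)) (pair_pmf Q ?M)"
    unfolding lessThan_Suc by (rule Pi_pmf_insert) auto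
  have pre: "(\<lambda>(y, g). g(n := y)) -` {cs. \<forall>k\<le>Suc n. traj s0 f cs k = d k}
     = {y. f (d n) y = d (Suc n)} \<times> {g. \<forall>k\<le>n. traj s0 f g k = d k}"
  proof (intro set_eqI iffI)
    fix x assume "x \<in> (\<lambda>(y, g). g(n := y)) -` {cs. \<forall>k\<le>Suc n. traj s0 f cs k = d k}"
    then obtain y g where x: "x = (y, g)" and h: "\<forall>k\<le>Suc n. traj s0 f (g(n := y)) k = d k"
      by (cases x) auto
    have eq: "\<And>k. k \<le> n \<Longrightarrow> traj s0 f (g(n := y)) k = traj s0 f g k"
      by (rule traj_cong) auto
    have a: "\<forall>k\<le>n. traj s0 f g k = d k" using h eq by auto
    have "traj s0 f (g(n := y)) (Suc n) = f (traj s0 f g n) y" using eq[of n] by simp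
    moreover have "traj s0 f (g(n := y)) (Suc n) = d (Suc n)" using h by blast
    ultimately have "f (d n) y = d (Suc n)" using a by auto
    then show "x \<in> {y. f (d n) y = d (Suc n)} \<times> {g. \<forall>k\<le>n. traj s0 f g k = d k}" using x a by auto
  next
    fix x assume "x \<in> {y. f (d n) y = d (Suc n)} \<times> {g. \<forall>k\<le>n. traj s0 f g k = d k}"
    then obtain y g where x: "x = (y, g)" and b: "f (d n) y = d (Suc n)" and a: "\<forall>k\<le>n. traj s0 f g k = d k"
      by (cases x) auto
    have eq: "\<And>k. k \<le> n \<Longrightarrow> traj s0 f (g(n := y)) k = traj s0 f g k"
      by (rule traj_cong) auto
    have "\<forall>k\<le>Suc n. traj s0 f (g(n := y)) k = d k"
    proof (intro allI impI)
      fix k assume "k \<le> Suc n"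
      then consider "k \<le> n" | "k = Suc n" by linarith
      then show "traj s0 f (g(n := y)) k = d k"
      proof cases
        case 1 then show ?thesis using eq a by auto
      next
        case 2 then show ?thesis using eq[of n] a b by simp
      qed
    qed
    then show "x \<in> (\<lambda>(y, g). g(n := y)) -` {cs. \<forall>k\<le>Suc n. traj s0 f cs k = d k}" using x by simp
  qed
  have "measure_pmf.prob (Pi_pmf {..<Suc n} dflt (\<lambda>_. Q)) {cs. \<forall>k\<le>Suc n. traj s0 f cs k = d k}
      = measure_pmf.prob Q {y. f (d n) y = d (Suc n)} * measure_pmf.prob ?M {g. \<forall>k\<le>n. traj s0 f g k = d k}"
    unfolding PI measure_map_pmf pre by (rule measure_pair_pmf_times)
  also have "measure_pmf.prob Q {y. f (d n) y = d (Suc n)} = pmf (map_pmf (f (d n)) Q) (d (Suc n))"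
    by (simp add: pmf_map vimage_def)
  finally show ?case using Suc.IH by (simp add: mult_ac)
qed

definition Qc :: "nat \<Rightarrow> real \<Rightarrow> (int \<Rightarrow> bool) pmf" where
  "Qc K \<epsilon> = Pi_pmf {- int K .. int K} False (\<lambda>_. bernoulli_pmf \<epsilon>)"

definition cols :: "nat \<Rightarrow> nat \<Rightarrow> (int \<times> int \<Rightarrow> bool) \<Rightarrow> nat \<Rightarrow> int \<Rightarrow> bool" where
  "cols K n \<omega> = (\<lambda>k. if k < n then col K \<omega> k else (\<lambda>_. False))"

definition Vs :: "nat \<Rightarrow> nat \<Rightarrow> (nat \<Rightarrow> int \<Rightarrow> bool) set" where
  "Vs K n = PiE_dflt {..<n} (\<lambda>_. False) (\<lambda>_. PiE_dflt {- int K .. int K} False (\<lambda>_. UNIV))"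

lemma finite_Vs: "finite (Vs K n)"
  unfolding Vs_def by (intro finite_PiE_dflt) auto

lemma cols_in_Vs: "cols K n \<omega> \<in> Vs K n"
  by (auto simp: cols_def Vs_def PiE_dflt_def col_def)

lemma set_pmf_mu_Vs: "set_pmf (Pi_pmf {..<n} (\<lambda>_. False) (\<lambda>_. Qc K \<epsilon>)) \<subseteq> Vs K n"
proof -
  have "set_pmf (Qc K \<epsilon>) \<subseteq> PiE_dflt {- int K .. int K} False (\<lambda>_. UNIV)"
    unfolding Qc_def by (subst set_Pi_pmf) (auto simp: PiE_dflt_def)
  then show ?thesis
    by (subst set_Pi_pmf) (auto simp: PiE_dflt_def Vs_def)
qed

lemma pmf_bern_flip: "0 \<le> \<epsilon> \<Longrightarrow> \<epsilon> \<le> 1 \<Longrightarrow> pmf (bernoulli_pmf (1 - \<epsilon>)) (\<not> b) = pmf (bernoulli_pmf \<epsilon>) b"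
  by (cases b) auto

lemma bridge:
  assumes e: "0 \<le> \<epsilon>" "\<epsilon> \<le> 1"
  shows "measure (edge_space \<epsilon>) {\<omega> \<in> space (edge_space \<epsilon>). cols K n \<omega> \<in> R}
       = measure_pmf.prob (Pi_pmf {..<n} (\<lambda>_. False) (\<lambda>_. Qc K \<epsilon>)) R"
proof -
  define M where "M = (\<lambda>_::int \<times> int. measure_pmf (bernoulli_pmf (1 - \<epsilon>)))"
  define S where "S = {- int K .. int K}"
  define J where "J = (\<lambda>(k, j). (int k, j)) ` ({..<n} \<times> S)"
  define mu where "mu = Pi_pmf {..<n} (\<lambda>_. False) (\<lambda>_. Qc K \<epsilon>)"
  have ES: "edge_space \<epsilon> = PiM UNIV M" by (simp add: edge_space_def M_def)
  interpret P: product_prob_space M UNIV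
    unfolding M_def by (intro product_prob_spaceI prob_space_measure_pmf)
  have finJ: "finite J" unfolding J_def S_def by auto
  have spc: "space (PiM UNIV M) = UNIV" by (simp add: space_PiM M_def)
  define F where "F cs = {\<omega> \<in> space (PiM UNIV M). cols K n \<omega> = cs}" for cs
  define E where "E cs = (\<lambda>v::int \<times> int. {\<not> cs (nat (fst v)) (snd v)})" for cs :: "nat \<Rightarrow> int \<Rightarrow> bool"
  have Femb: "F cs = prod_emb UNIV M J (PiE J (E cs))" if cs: "cs \<in> Vs K n" for cs
  proof (intro set_eqI iffI)
    fix \<omega> assume "\<omega> \<in> F cs"
    then have h: "cols K n \<omega> = cs" by (simp add: F_def)
    have "\<omega> v \<in> E cs v" if "v \<in> J" for v
    proof -
      obtain k j where v: "v = (int k, j)" "k < n" "j \<in> S" using \<open>v \<in> J\<close> by (auto simp: J_def)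
      have "cs k j = cols K n \<omega> k j" using h by simp
      also have "\<dots> = (\<not> \<omega> (int k, j))" using v by (simp add: cols_def col_def S_def)
      finally show ?thesis using v by (simp add: E_def)
    qed
    then show "\<omega> \<in> prod_emb UNIV M J (PiE J (E cs))"
      by (auto simp: prod_emb_def space_PiM M_def)
  next
    fix \<omega> assume "\<omega> \<in> prod_emb UNIV M J (PiE J (E cs))"
    then have h: "\<And>v. v \<in> J \<Longrightarrow> \<omega> v \<in> E cs v" by (auto simp: prod_emb_def PiE_def Pi_def)
    have "cols K n \<omega> k j = cs k j" for k j
    proof (cases "k < n \<and> j \<in> S")
      case True
      then have "(int k, j) \<in> J" by (auto simp: J_def)
      from h[OF this] True show ?thesis by (simp add: E_def cols_def col_def S_def)
    next
      case False
      then show ?thesis using cs by (auto simp: cols_def col_def S_def Vs_def PiE_dflt_def)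
    qed
    then show "\<omega> \<in> F cs" by (auto simp: F_def spc)
  qed
  have Fsets: "F cs \<in> sets (PiM UNIV M)" if "cs \<in> Vs K n" for cs
    unfolding Femb[OF that] by (rule sets_PiM_I) (auto simp: finJ M_def)
  have Fmeas: "measure (PiM UNIV M) (F cs) = pmf mu cs" if cs: "cs \<in> Vs K n" for cs
  proof -
    have "measure (PiM UNIV M) (F cs) = (\<Prod>v\<in>J. measure (M v) (E cs v))"
      unfolding Femb[OF cs] by (rule P.measure_PiM_emb) (auto simp: finJ M_def)
    also have "\<dots> = (\<Prod>v\<in>J. pmf (bernoulli_pmf \<epsilon>) (cs (nat (fst v)) (snd v)))"
    proof (rule prod.cong[OF HOL.refl])
      fix v show "measure (M v) (E cs v) = pmf (bernoulli_pmf \<epsilon>) (cs (nat (fst v)) (snd v))"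
        unfolding M_def E_def measure_pmf_single by (rule pmf_bern_flip[OF e])
    qed
    also have "\<dots> = (\<Prod>x\<in>{..<n} \<times> S. pmf (bernoulli_pmf \<epsilon>) (cs (fst x) (snd x)))"
      unfolding J_def by (subst prod.reindex) (auto simp: inj_on_def split_beta intro!: prod.cong)
    also have "\<dots> = (\<Prod>k<n. \<Prod>j\<in>S. pmf (bernoulli_pmf \<epsilon>) (cs k j))"
      by (simp add: prod.cartesian_product split_beta)
    also have "\<dots> = (\<Prod>k<n. pmf (Qc K \<epsilon>) (cs k))"
    proof (intro prod.cong HOL.refl)
      fix k assume "k \<in> {..<n}"
      have "\<forall>j. j \<notin> S \<longrightarrow> cs k j = False" using cs \<open>k \<in> {..<n}\<close>
        by (auto simp: Vs_def PiE_dflt_def S_def)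
      then show "(\<Prod>j\<in>S. pmf (bernoulli_pmf \<epsilon>) (cs k j)) = pmf (Qc K \<epsilon>) (cs k)"
        unfolding Qc_def S_def by (subst pmf_Pi) (auto simp: S_def)
    qed
    also have "\<dots> = pmf mu cs"
      unfolding mu_def using cs by (subst pmf_Pi) (auto simp: Vs_def PiE_dflt_def)
    finally show ?thesis .
  qed
  have U: "{\<omega> \<in> space (PiM UNIV M). cols K n \<omega> \<in> R} = (\<Union>cs\<in>R \<inter> Vs K n. F cs)"
    using cols_in_Vs by (auto simp: F_def)
  have "measure (PiM UNIV M) {\<omega> \<in> space (PiM UNIV M). cols K n \<omega> \<in> R} = (\<Sum>cs\<in>R \<inter> Vs K n. measure (PiM UNIV M) (F cs))"
    unfolding U
    by (rule P.finite_measure_finite_Union) (use Fsets in \<open>auto simp: finite_Vs disjoint_family_on_def F_def\<close>)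
  also have "\<dots> = (\<Sum>cs\<in>R \<inter> Vs K n. pmf mu cs)" by (intro sum.cong HOL.refl) (simp add: Fmeas)
  also have "\<dots> = measure_pmf.prob mu (R \<inter> Vs K n)"
    by (rule measure_measure_pmf_finite[symmetric]) (simp add: finite_Vs)
  also have "\<dots> = measure_pmf.prob mu R"
  proof -
    have "R \<inter> Vs K n \<inter> set_pmf mu = R \<inter> set_pmf mu" using set_pmf_mu_Vs[of n K \<epsilon>] by (auto simp: mu_def)
    then show ?thesis by (metis measure_Int_set_pmf)
  qed
  finally show ?thesis unfolding ES mu_def .
qed

lemma chain_measure:
  assumes e: "0 \<le> \<epsilon>" "\<epsilon> \<le> 1"
    and X: "\<And>n \<omega> k. k \<le> n \<Longrightarrow> X \<omega> k = traj s f (cols K n \<omega>) k"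
  shows "measure (edge_space \<epsilon>) {\<omega> \<in> space (edge_space \<epsilon>). \<forall>k\<le>n. X \<omega> k = d k}
     = (if d 0 = s then 1 else 0) * (\<Prod>k<n. pmf (map_pmf (f (d k)) (Qc K \<epsilon>)) (d (Suc k)))"
proof -
  have "{\<omega> \<in> space (edge_space \<epsilon>). \<forall>k\<le>n. X \<omega> k = d k}
      = {\<omega> \<in> space (edge_space \<epsilon>). cols K n \<omega> \<in> {cs. \<forall>k\<le>n. traj s f cs k = d k}}"
    using X by auto
  then have "measure (edge_space \<epsilon>) {\<omega> \<in> space (edge_space \<epsilon>). \<forall>k\<le>n. X \<omega> k = d k}
     = measure_pmf.prob (Pi_pmf {..<n} (\<lambda>_. False) (\<lambda>_. Qc K \<epsilon>)) {cs. \<forall>k\<le>n. traj s f cs k = d k}"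
    by (simp only: bridge[OF e, of K n])
  also have "\<dots> = (if d 0 = s then 1 else 0) * (\<Prod>k<n. pmf (map_pmf (f (d k)) (Qc K \<epsilon>)) (d (Suc k)))"
    by (rule markov)
  finally show ?thesis .
qed

lemma Dvec_traj:
  assumes "K \<ge> 1"
  shows "k \<le> n \<Longrightarrow> Dvec K \<omega> k = traj (d0 K) (fD K) (cols K n \<omega>) k"
proof (induction k)
  case 0 then show ?case using Dvec_0[OF assms] by simp
next
  case (Suc k)
  then show ?case using Dvec_Suc[OF assms, of \<omega> k] by (simp add: cols_def)
qed

lemma Yvec_traj:
  assumes "K \<ge> 1"
  shows "k \<le> n \<Longrightarrow> Yvec K \<omega> k = traj (Gy K (\<lambda>j. \<bar>j\<bar>)) (tasep_update K) (cols K n \<omega>) k"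
proof (induction k)
  case 0 then show ?case using Yvec_0[OF assms] by simp
next
  case (Suc k)
  then show ?case using Yvec_Suc[OF assms, of \<omega> k] by (simp add: cols_def)
qed

theorem proposition3:
  fixes K :: nat and \<epsilon> :: real
  assumes "K \<ge> 1" and "0 < \<epsilon>" and "\<epsilon> < 1"
  shows "(\<exists>p :: (int \<Rightarrow> nat) \<Rightarrow> (int \<Rightarrow> nat) pmf.
            \<forall>(n::nat) (d :: nat \<Rightarrow> int \<Rightarrow> nat).
              measure (edge_space \<epsilon>) {\<omega> \<in> space (edge_space \<epsilon>). \<forall>k\<le>n. Dvec K \<omega> k = d k}
              = measure (edge_space \<epsilon>) {\<omega> \<in> space (edge_space \<epsilon>). Dvec K \<omega> 0 = d 0}
                * (\<Prod>k<n. pmf (p (d k)) (d (Suc k))))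
       \<and> (\<forall>(n::nat) (y :: nat \<Rightarrow> int \<Rightarrow> bool).
              measure (edge_space \<epsilon>) {\<omega> \<in> space (edge_space \<epsilon>). \<forall>k\<le>n. Yvec K \<omega> k = y k}
              = measure (edge_space \<epsilon>) {\<omega> \<in> space (edge_space \<epsilon>). Yvec K \<omega> 0 = y 0}
                * (\<Prod>k<n. pmf (tasep_step K \<epsilon> (y k)) (y (Suc k))))"
proof (intro conjI exI allI)
  have e: "0 \<le> \<epsilon>" "\<epsilon> \<le> 1" using assms by auto
  fix n :: nat
  {
    fix d :: "nat \<Rightarrow> int \<Rightarrow> nat"
    note cm = chain_measure[OF e, where X = "Dvec K" and s = "d0 K" and f = "fD K" and K = K, OF Dvec_traj[OF assms(1)]]
    have z: "{\<omega> \<in> space (edge_space \<epsilon>). Dvec K \<omega> 0 = d 0} = {\<omega> \<in> space (edge_space \<epsilon>). \<forall>k\<le>0. Dvec K \<omega> k = d k}"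
      by auto
    show "measure (edge_space \<epsilon>) {\<omega> \<in> space (edge_space \<epsilon>). \<forall>k\<le>n. Dvec K \<omega> k = d k}
              = measure (edge_space \<epsilon>) {\<omega> \<in> space (edge_space \<epsilon>). Dvec K \<omega> 0 = d 0}
                * (\<Prod>k<n. pmf ((\<lambda>d. map_pmf (fD K d) (Qc K \<epsilon>)) (d k)) (d (Suc k)))"
      unfolding z using cm[of n d] cm[of 0 d] by simp
  }
  {
    fix y :: "nat \<Rightarrow> int \<Rightarrow> bool"
    note cm = chain_measure[OF e, where X = "Yvec K" and s = "Gy K (\<lambda>j. \<bar>j\<bar>)" and f = "tasep_update K" and K = K, OF Yvec_traj[OF assms(1)]]
    have z: "{\<omega> \<in> space (edge_space \<epsilon>). Yvec K \<omega> 0 = y 0} = {\<omega> \<in> space (edge_space \<epsilon>). \<forall>k\<le>0. Yvec K \<omega> k = y k}"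
      by auto
    have ts: "\<And>y. tasep_step K \<epsilon> y = map_pmf (tasep_update K y) (Qc K \<epsilon>)"
      by (simp add: tasep_step_def Qc_def)
    show "measure (edge_space \<epsilon>) {\<omega> \<in> space (edge_space \<epsilon>). \<forall>k\<le>n. Yvec K \<omega> k = y k}
              = measure (edge_space \<epsilon>) {\<omega> \<in> space (edge_space \<epsilon>). Yvec K \<omega> 0 = y 0}
                * (\<Prod>k<n. pmf (tasep_step K \<epsilon> (y k)) (y (Suc k)))"
      unfolding z ts using cm[of n y] cm[of 0 y] by simp
  }
qed

end
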